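(* Let $\rho(\mathbf{x})\in[0,1]$ be the responsiveness of a prediction at $\mathbf{x}$ and fix $\varepsilon\in(0,1)$ and $\alpha\in(0,1)$. Consider testing $H_0:\rho(\mathbf{x})\ge\varepsilon$ versus $H_1:\rho(\mathbf{x})<\varepsilon$ using $n$ i.i.d. reachable points, with empirical responsiveness $\hat\rho_n\in\{0,1/n,\dots,1\}$, by rejecting $H_0$ iff $\mathsf{B}_{1-\alpha}(n\hat\rho_n+1,\ n-n\hat\rho_n)<\varepsilon$, where $\mathsf{B}_q(a,b)$ is the $q$-th quantile of the Beta$(a,b)$ distribution. Then rejecting $H_0$ implies $$n>\frac{\log\alpha}{\log(1-\varepsilon)}.$$
   Context: The responsiveness is $\rho(\mathbf{x})=\Pr[f(\mathbf{x}')\in\mathcal{Y}_T(\mathbf{x})]$ for $\mathbf{x}'$ drawn from a distribution $\mathbb{P}^{\mathrm{reach}}_{\mathbf{x}}$ over points reachable from $\mathbf{x}$ under interventions, where $f$ is a model and $\mathcal{Y}_T(\mathbf{x})$ a target prediction set; $\hat\rho_n$ is the fraction of the $n$ sampled points whose prediction lies in $\mathcal{Y}_T(\mathbf{x})$. A Beta distribution with second parameter $0$ is the point mass at $1$. *)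

theory Defs
  imports "HOL-Analysis.Analysis"
begin

definition beta_density :: "real \<Rightarrow> real \<Rightarrow> real \<Rightarrow> real" where
  "beta_density a b s =
     (if 0 < s \<and> s < 1 then s powr (a - 1) * (1 - s) powr (b - 1) / Beta a b else 0)"

text \<open>CDF of Beta(a,b). For b = 0 the distribution is, by convention, the point mass at 1.\<close>
definition beta_cdf :: "real \<Rightarrow> real \<Rightarrow> real \<Rightarrow> real" where
  "beta_cdf a b t =
     (if b = 0 then (if 1 \<le> t then 1 else 0)
      else (LINT s|lborel. indicator {..t} s * beta_density a b s))"

definition beta_quantile :: "real \<Rightarrow> real \<Rightarrow> real \<Rightarrow> real" where
  "beta_quantile q a b = Inf {t. q \<le> beta_cdf a b t}"

end

theory Submission
  imports Defs
begin

lemma lint_from_hk: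
  fixes f :: "real \<Rightarrow> real"
  assumes m: "f \<in> borel_measurable borel" and h: "(f has_integral I) UNIV"
    and nn: "\<And>x. 0 \<le> f x"
  shows "(LINT x|lborel. f x) = I"
proof -
  have "f absolutely_integrable_on UNIV"
    using h nn by (intro nonnegative_absolutely_integrable_1) (auto simp: has_integral_integrable)
  then have "integrable lebesgue f"
    by (simp add: absolutely_integrable_on_def set_integrable_def)
  then have il: "integrable lborel f"
    using integrable_completion[of f lborel] m by simp
  have "integral UNIV f = (LINT x|lborel. f x)" by (rule integral_lborel[OF il])
  moreover have "integral UNIV f = I" using h by (rule integral_unique)
  ultimately show ?thesis by simp
qed

lemma cdf_eq:
  fixes a b t :: real
  assumes a: "a > 0" and b: "b > 0" and t: "0 \<le> t" "t \<le> 1"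
  shows "beta_cdf a b t = integral {0..t} (\<lambda>s. s powr (a - 1) * (1 - s) powr (b - 1)) / Beta a b"
proof -
  define \<phi> where "\<phi> = (\<lambda>s::real. s powr (a - 1) * (1 - s) powr (b - 1))"
  have hB: "(\<phi> has_integral Beta a b) {0..1}" unfolding \<phi>_def by (rule has_integral_Beta_real[OF a b])
  have int: "\<phi> integrable_on {0..t}"
    using integrable_subinterval_real[of \<phi> 0 1 0 t] hB t by (auto simp: has_integral_integrable)
  have eq: "(\<lambda>s. indicator {..t} s * beta_density a b s) = (\<lambda>s. if s \<in> {0..t} then \<phi> s / Beta a b else 0)"
  proof
    fix s :: real
    show "indicator {..t} s * beta_density a b s = (if s \<in> {0..t} then \<phi> s / Beta a b else 0)"
      using t by (cases "s = 0"; cases "s = 1") (auto simp: beta_density_def \<phi>_def indicator_def)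
  qed
  have hi: "((\<lambda>s. if s \<in> {0..t} then \<phi> s / Beta a b else 0) has_integral (integral {0..t} \<phi> / Beta a b)) UNIV"
    apply (subst has_integral_restrict_UNIV)
    using has_integral_divide[OF integrable_integral[OF int], of "Beta a b"] by simp
  have Bpos: "Beta a b > 0" using a b by (simp add: Beta_def Gamma_real_pos)
  have "(LINT s|lborel. (if s \<in> {0..t} then \<phi> s / Beta a b else 0)) = integral {0..t} \<phi> / Beta a b"
    by (rule lint_from_hk[OF _ hi]) (use Bpos in \<open>auto simp: \<phi>_def\<close>, unfold \<phi>_def, measurable)
  then show ?thesis using b unfolding beta_cdf_def eq \<phi>_def by simp
qed


lemma head_bound:
  fixes a b t :: real
  assumes a: "a \<ge> 1" and b: "b > 0" and t: "0 < t" "t < 1"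
  shows "integral {0..t} (\<lambda>s. s powr (a - 1) * (1 - s) powr (b - 1))
           \<le> Beta a b - (1 - t) powr (a + b - 1) * Beta a b"
proof -
  define \<phi> where "\<phi> = (\<lambda>s::real. s powr (a - 1) * (1 - s) powr (b - 1))"
  define \<psi> where "\<psi> = (\<lambda>s::real. (s - t) powr (a - 1) * (1 - s) powr (b - 1))"
  have hB: "(\<phi> has_integral Beta a b) {0..1}" unfolding \<phi>_def by (rule has_integral_Beta_real) (use a b in auto)
  define m where "m = 1 / (1 - t)"
  define c where "c = - t / (1 - t)"
  have mpos: "m > 0" using t by (simp add: m_def)
  have "((\<lambda>x. \<phi> (m *\<^sub>R x + c)) has_integral (Beta a b /\<^sub>R m ^ DIM(real)))
           (cbox ((0 - c) /\<^sub>R m) ((1 - c) /\<^sub>R m))"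
    using has_integral_affinity'[OF _ mpos, of \<phi> "Beta a b" 0 1 c] hB by simp
  moreover have "(0 - c) /\<^sub>R m = t" "(1 - c) /\<^sub>R m = 1" "Beta a b /\<^sub>R m ^ DIM(real) = (1 - t) * Beta a b"
    using t by (auto simp: m_def c_def field_simps)
  ultimately have h1: "((\<lambda>x. \<phi> (m * x + c)) has_integral ((1 - t) * Beta a b)) {t..1}"
    using t by (simp add: m_def)
  have h2: "((\<lambda>x. (1 - t) powr (a + b - 2) * \<phi> (m * x + c)) has_integral
              ((1 - t) powr (a + b - 2) * ((1 - t) * Beta a b))) {t..1}"
    by (rule has_integral_mult_right[OF h1])
  have eqv: "(1 - t) powr (a + b - 2) * \<phi> (m * x + c) = \<psi> x" if x: "x \<in> {t..1}" for x
  proof -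
    have tne: "1 - t \<noteq> 0" using t by simp
    have e0: "m * x + c = (x - t) / (1 - t)"
      unfolding m_def c_def by (simp add: diff_divide_distrib)
    have e1: "m * x + c = (x - t) / (1 - t)" "1 - (x - t) / (1 - t) = (1 - x) / (1 - t)"
       apply (rule e0) using tne by (simp add: divide_simps)
    have "(1 - t) powr (a + b - 2) * \<phi> (m * x + c)
        = (1 - t) powr (a + b - 2) * ((x - t) powr (a - 1) / (1 - t) powr (a - 1))
            * ((1 - x) powr (b - 1) / (1 - t) powr (b - 1))"
      unfolding \<phi>_def e1(1) e1(2) using x t by (simp add: powr_divide)
    also have "\<dots> = ((1 - t) powr (a + b - 2) / ((1 - t) powr (a - 1) * (1 - t) powr (b - 1)))
            * ((x - t) powr (a - 1) * (1 - x) powr (b - 1))"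
      by (simp add: field_simps)
    also have "(1 - t) powr (a - 1) * (1 - t) powr (b - 1) = (1 - t) powr (a + b - 2)"
      by (simp add: powr_add[symmetric])
    also have "(1 - t) powr (a + b - 2) / (1 - t) powr (a + b - 2) = 1" using t by simp
    finally show ?thesis by (simp add: \<psi>_def)
  qed
  have h3: "(\<psi> has_integral ((1 - t) powr (a + b - 1) * Beta a b)) {t..1}"
  proof -
    have "(1 - t) powr (a + b - 2) * ((1 - t) * Beta a b) = (1 - t) powr (a + b - 1) * Beta a b"
    proof -
      have "(1 - t) powr (a + b - 1) = (1 - t) powr ((a + b - 2) + 1)" by simp
      also have "\<dots> = (1 - t) powr (a + b - 2) * (1 - t) powr 1"
        by (rule powr_add)
      also have "\<dots> = (1 - t) powr (a + b - 2) * (1 - t)"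
        using t by simp
      finally show ?thesis by simp
    qed
    then show ?thesis using has_integral_eq[OF eqv h2] by metis
  qed
  have int01: "\<phi> integrable_on {0..1}" using hB by (auto simp: has_integral_integrable)
  have intt1: "\<phi> integrable_on {t..1}" using integrable_subinterval_real[OF int01, of t 1] t by auto
  have le: "(1 - t) powr (a + b - 1) * Beta a b \<le> integral {t..1} \<phi>"
  proof (rule has_integral_le[OF h3 integrable_integral[OF intt1]])
    fix x assume x: "x \<in> {t..1}"
    have "(x - t) powr (a - 1) \<le> x powr (a - 1)"
      using x t a by (intro powr_mono2) auto
    then show "\<psi> x \<le> \<phi> x" unfolding \<psi>_def \<phi>_def
      by (intro mult_right_mono) auto
  qed
  have "integral {0..t} \<phi> + integral {t..1} \<phi> = integral {0..1} \<phi>"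
    using Henstock_Kurzweil_Integration.integral_combine[OF _ _ int01, of t] t by simp
  also have "\<dots> = Beta a b" using hB by (rule integral_unique)
  finally show ?thesis using le unfolding \<phi>_def by simp
qed


lemma cdf_neg:
  fixes a b t :: real
  assumes b: "b > 0" and t: "t < 0"
  shows "beta_cdf a b t = 0"
proof -
  have "(\<lambda>s. indicator {..t} s * beta_density a b s) = (\<lambda>s. 0)"
    using t by (auto simp: beta_density_def indicator_def fun_eq_iff)
  then show ?thesis using b unfolding beta_cdf_def by simp
qed

theorem mainTheorem3:
  fixes n :: nat and rho_hat \<epsilon> \<alpha> :: real
  assumes "n > 0"
    and "rho_hat \<in> {real k / real n | k. k \<le> n}"
    and "0 < \<epsilon>" "\<epsilon> < 1"
    and "0 < \<alpha>" "\<alpha> < 1"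
    and "beta_quantile (1 - \<alpha>) (real n * rho_hat + 1) (real n - real n * rho_hat) < \<epsilon>"
  shows "real n > ln \<alpha> / ln (1 - \<epsilon>)"
proof -
  obtain k where k: "k \<le> n" "rho_hat = real k / real n" using assms(2) by auto
  have nk: "real n * rho_hat = real k" using k assms(1) by simp
  define S where "S = {t. 1 - \<alpha> \<le> beta_cdf (real k + 1) (real n - real k) t}"
  have q: "Inf S < \<epsilon>" using assms(7) unfolding beta_quantile_def S_def nk .
  show ?thesis
  proof (cases "k = n")
    case True
    have "S = {1..}" unfolding S_def beta_cdf_def True using assms(5,6) by auto
    then show ?thesis using q assms(4) by simp
  next
    case False
    then have kn: "k < n" using k by simp
    define a where "a = real k + 1"
    define b where "b = real n - real k"
    have a1: "a \<ge> 1" and bpos: "b > 0" using kn by (auto simp: a_def b_def)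
    have ab: "a + b - 1 = real n" by (simp add: a_def b_def)
    have Bpos: "Beta a b > 0" using a1 bpos by (simp add: Beta_def Gamma_real_pos)
    have hB: "((\<lambda>s. s powr (a - 1) * (1 - s) powr (b - 1)) has_integral Beta a b) {0..1}"
      by (rule has_integral_Beta_real) (use a1 bpos in auto)
    have "beta_cdf a b 1 = 1"
      using cdf_eq[of a b 1] a1 bpos integral_unique[OF hB] Bpos by simp
    then have "1 \<in> S" unfolding S_def a_def b_def using assms(5) by simp
    then have "S \<noteq> {}" by auto
    from cInf_lessD[OF this q] obtain t where t: "t \<in> S" "t < \<epsilon>" by auto
    have cdft: "1 - \<alpha> \<le> beta_cdf a b t" using t(1) unfolding S_def a_def b_def by simp
    have tpos: "t > 0"
    proof (rule ccontr)
      assume "\<not> t > 0"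
      then have "beta_cdf a b t = 0"
      proof (cases "t = 0")
        case True
        then show ?thesis using cdf_eq[of a b 0] a1 bpos by simp
      qed (use cdf_neg[OF bpos] \<open>\<not> t > 0\<close> in auto)
      then show False using cdft assms(6) by simp
    qed
    have t1: "t < 1" using t(2) assms(4) by simp
    have "beta_cdf a b t \<le> (Beta a b - (1 - t) powr (a + b - 1) * Beta a b) / Beta a b"
      using cdf_eq[of a b t] head_bound[OF a1 bpos tpos t1] a1 bpos tpos t1 Bpos
      by (simp add: divide_right_mono)
    also have "\<dots> = 1 - (1 - t) ^ n"
      using Bpos t1 by (simp add: ab powr_realpow field_simps)
    finally have "(1 - t) ^ n \<le> \<alpha>" using cdft by simp
    moreover have "(1 - \<epsilon>) ^ n < (1 - t) ^ n"
      using t(2) assms(1,4) by (intro power_strict_mono) auto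
    ultimately have "(1 - \<epsilon>) ^ n < \<alpha>" by simp
    then have "ln ((1 - \<epsilon>) ^ n) < ln \<alpha>"
      using assms(4,5) by (intro ln_less_cancel_iff[THEN iffD2]) auto
    then have lt: "real n * ln (1 - \<epsilon>) < ln \<alpha>"
      using assms(4) by (simp add: ln_realpow)
    have "ln (1 - \<epsilon>) < 0" using assms(3,4) by simp
    then show ?thesis using lt by (simp add: neg_divide_less_eq mult.commute)
  qed
qed

end
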